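(* There is a bijection $\beta\mapsto g(\beta)$ from the set of left collinearity points of $B$ onto the set of oriented lines in $\mathbb{R}^3$ such that, for all $p,P\in\mathbb{R}^3$, the pseudo spherical condition for $(p,P)$ at $\beta$ holds if and only if $p\in g(\beta)$. Likewise, there is a bijection $\beta\mapsto g(\beta)$ from the set of right collinearity points onto the set of oriented lines such that, for all $p,P\in\mathbb{R}^3$, the pseudo spherical condition for $(p,P)$ at $\beta$ holds if and only if $P\in g(\beta)$.
   Context: Write a direct isometry as $v\mapsto Mv+y$ ($M\in SO(3)$) and put $x=-M^ty$, $r=\langle y,y\rangle$. It corresponds to $(h:M:x:y:r)=(1:m_{11}:\dots:m_{33}:x_1:x_2:x_3:y_1:y_2:y_3:r)\in\mathbb{P}^{16}_{\mathbb{C}}$. $X$ is the complex Zariski closure of all such points. Throughout, $\langle u,u'\rangle=u^tu'$ is the complex bilinear form on $\mathbb{C}^3$. The boundary is $B=X\cap\{h=0\}$. A point $\beta=(0:M:x:y:r)\in B$ with $M=0$ is a left collinearity point if $x\neq0$ and $y=0$, and a right collinearity point if $x=0$ and $y\ne0$. The pseudo spherical condition for $(p,P)$ at $\beta$ is the complex equation $r-2\langle p,x\rangle-2\langle y,P\rangle-2\langle Mp,P\rangle=0$. *)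

theory Defs
  imports "HOL-Analysis.Analysis"
begin

text \<open>Homogeneous coordinates (h : M : x : y : r) of P^16 over the complex numbers.\<close>
type_synonym pt = "complex \<times> ((complex^3)^3) \<times> (complex^3) \<times> (complex^3) \<times> complex"

definition ph :: "pt \<Rightarrow> complex" where "ph v = fst v"
definition pM :: "pt \<Rightarrow> complex^3^3" where "pM v = fst (snd v)"
definition px :: "pt \<Rightarrow> complex^3" where "px v = fst (snd (snd v))"
definition py :: "pt \<Rightarrow> complex^3" where "py v = fst (snd (snd (snd v)))"
definition pr :: "pt \<Rightarrow> complex" where "pr v = snd (snd (snd (snd v)))"

definition pscale :: "complex \<Rightarrow> pt \<Rightarrow> pt" where
  "pscale c v = (c * ph v, (\<chi> i j. c * pM v $ i $ j), c *s px v, c *s py v, c * pr v)"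

definition pzero :: "pt \<Rightarrow> bool" where
  "pzero v \<longleftrightarrow> ph v = 0 \<and> pM v = 0 \<and> px v = 0 \<and> py v = 0 \<and> pr v = 0"

definition pclass :: "pt \<Rightarrow> pt set" where
  "pclass v = {pscale c v | c. c \<noteq> 0}"

text \<open>Complex bilinear (not Hermitian) form on C^3.\<close>
definition cdot :: "complex^3 \<Rightarrow> complex^3 \<Rightarrow> complex" where
  "cdot u w = (\<Sum>i\<in>UNIV. u $ i * w $ i)"

definition cvec :: "real^3 \<Rightarrow> complex^3" where
  "cvec u = (\<chi> i. complex_of_real (u $ i))"

definition cmat :: "real^3^3 \<Rightarrow> complex^3^3" where
  "cmat A = (\<chi> i j. complex_of_real (A $ i $ j))"

definition SO3 :: "(real^3^3) set" where
  "SO3 = {M. orthogonal_matrix M \<and> det M = 1}"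

text \<open>The point (1 : M : x : y : r) of the direct isometry v \<mapsto> M v + y,
  with x = - M^t y and r = <y,y>.\<close>
definition iso_pt :: "real^3^3 \<Rightarrow> real^3 \<Rightarrow> pt" where
  "iso_pt M y = (1, cmat M, cvec (- (transpose M *v y)), cvec y, complex_of_real (y \<bullet> y))"

inductive polyfun :: "(pt \<Rightarrow> complex) \<Rightarrow> bool" where
  pf_const: "polyfun (\<lambda>v. c)"
| pf_h: "polyfun ph"
| pf_M: "polyfun (\<lambda>v. pM v $ i $ j)"
| pf_x: "polyfun (\<lambda>v. px v $ i)"
| pf_y: "polyfun (\<lambda>v. py v $ i)"
| pf_r: "polyfun pr"
| pf_add: "polyfun f \<Longrightarrow> polyfun g \<Longrightarrow> polyfun (\<lambda>v. f v + g v)"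
| pf_mult: "polyfun f \<Longrightarrow> polyfun g \<Longrightarrow> polyfun (\<lambda>v. f v * g v)"

definition homogeneous_of :: "nat \<Rightarrow> (pt \<Rightarrow> complex) \<Rightarrow> bool" where
  "homogeneous_of d f \<longleftrightarrow> (\<forall>c v. f (pscale c v) = c ^ d * f v)"

text \<open>Affine cone (minus 0) over X: the Zariski closure in P^16 of all points of direct isometries,
  i.e. the common nonzero zeros of all homogeneous polynomials vanishing on these points.\<close>
definition Xcone :: "pt set" where
  "Xcone = {v. \<not> pzero v \<and>
     (\<forall>f d. polyfun f \<and> homogeneous_of d f \<and> (\<forall>M\<in>SO3. \<forall>y. f (iso_pt M y) = 0) \<longrightarrow> f v = 0)}"

definition Bnd :: "pt set set" where
  "Bnd = {pclass v | v. v \<in> Xcone \<and> ph v = 0}"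

definition left_coll :: "pt set set" where
  "left_coll = {pclass v | v. v \<in> Xcone \<and> ph v = 0 \<and> pM v = 0 \<and> px v \<noteq> 0 \<and> py v = 0}"

definition right_coll :: "pt set set" where
  "right_coll = {pclass v | v. v \<in> Xcone \<and> ph v = 0 \<and> pM v = 0 \<and> px v = 0 \<and> py v \<noteq> 0}"

text \<open>Pseudo spherical condition for (p,P) at a representative v, and at a projective point
  (the condition is homogeneous linear, hence independent of the representative).\<close>
definition psc_vec :: "pt \<Rightarrow> real^3 \<Rightarrow> real^3 \<Rightarrow> bool" where
  "psc_vec v p P \<longleftrightarrow>
     pr v - 2 * cdot (cvec p) (px v) - 2 * cdot (py v) (cvec P) - 2 * cdot (pM v *v cvec p) (cvec P) = 0"

definition psc :: "pt set \<Rightarrow> real^3 \<Rightarrow> real^3 \<Rightarrow> bool" where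
  "psc \<beta> p P \<longleftrightarrow> (\<forall>v\<in>\<beta>. psc_vec v p P)"

definition oriented_lines :: "((real^3) set \<times> (real^3)) set" where
  "oriented_lines = {(L, d). norm d = 1 \<and> (\<exists>q. L = {q + t *\<^sub>R d | t. True})}"

end

theory Submission
  imports Defs "HOL-Complex_Analysis.Conformal_Mappings"
begin


lemma pt_eq_iff: "v = w \<longleftrightarrow> ph v = ph w \<and> pM v = pM w \<and> px v = px w \<and> py v = py w \<and> pr v = pr w"
  by (cases v; cases w) (auto simp: ph_def pM_def px_def py_def pr_def)

lemma pscale_parts[simp]:
  "ph (pscale c v) = c * ph v" "pM (pscale c v) = (\<chi> i j. c * pM v $ i $ j)"
  "px (pscale c v) = c *s px v" "py (pscale c v) = c *s py v" "pr (pscale c v) = c * pr v"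
  by (simp_all add: pscale_def ph_def pM_def px_def py_def pr_def)

lemma pscale_mult: "pscale c (pscale c' v) = pscale (c*c') v"
  by (simp add: pt_eq_iff vec_eq_iff algebra_simps)

lemma pscale_one[simp]: "pscale 1 v = v"
  by (simp add: pt_eq_iff vec_eq_iff)

lemma pclass_self: "v \<in> pclass v"
  unfolding pclass_def by (rule CollectI, rule exI[of _ 1]) simp

lemma pclass_scale: assumes "c \<noteq> 0" shows "pclass (pscale c v) = pclass v"
proof
  show "pclass (pscale c v) \<subseteq> pclass v"
    using assms by (auto simp: pclass_def pscale_mult)
  show "pclass v \<subseteq> pclass (pscale c v)"
  proof
    fix w assume "w \<in> pclass v"
    then obtain e where e: "e \<noteq> 0" "w = pscale e v" by (auto simp: pclass_def)
    have "w = pscale (e / c) (pscale c v)" using e assms by (simp add: pscale_mult)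
    then show "w \<in> pclass (pscale c v)" using e assms unfolding pclass_def by auto
  qed
qed

lemma pclass_eqD: assumes "pclass v = pclass w" shows "\<exists>c. c \<noteq> 0 \<and> v = pscale c w"
  using pclass_self[of v] assms by (auto simp: pclass_def)

lemma pzero_scale: "c \<noteq> 0 \<Longrightarrow> pzero (pscale c v) \<longleftrightarrow> pzero v"
  by (auto simp: pzero_def vec_eq_iff)

lemma Xcone_scale: assumes "v \<in> Xcone" "c \<noteq> 0" shows "pscale c v \<in> Xcone"
proof -
  have h: "\<And>f d. polyfun f \<Longrightarrow> homogeneous_of d f \<Longrightarrow> (\<forall>M\<in>SO3. \<forall>y. f (iso_pt M y) = 0) \<Longrightarrow> f v = 0"
    and nz: "\<not> pzero v" using assms(1) unfolding Xcone_def by blast+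
  show ?thesis unfolding Xcone_def
  proof (intro CollectI conjI allI impI)
    show "\<not> pzero (pscale c v)" using nz assms(2) by (simp add: pzero_scale)
    fix f d assume a: "polyfun f \<and> homogeneous_of d f \<and> (\<forall>M\<in>SO3. \<forall>y. f (iso_pt M y) = 0)"
    then have "f (pscale c v) = c ^ d * f v" unfolding homogeneous_of_def by blast
    moreover have "f v = 0" using h a by blast
    ultimately show "f (pscale c v) = 0" by simp
  qed
qed

definition psc_val :: "pt \<Rightarrow> real^3 \<Rightarrow> real^3 \<Rightarrow> complex" where
  "psc_val v p P = pr v - 2 * cdot (cvec p) (px v) - 2 * cdot (py v) (cvec P) - 2 * cdot (pM v *v cvec p) (cvec P)"

lemma cdot_scale: "cdot (c *s u) w = c * cdot u w" "cdot u (c *s w) = c * cdot u w"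
  by (simp_all add: cdot_def sum_distrib_left algebra_simps)

lemma mat_scale_mult: "(\<chi> i j. c * (M::complex^3^3) $ i $ j) *v u = c *s (M *v u)"
  by (simp add: matrix_vector_mult_def vec_eq_iff sum_distrib_left algebra_simps)

lemma psc_val_scale: "psc_val (pscale c v) p P = c * psc_val v p P"
  by (simp add: psc_val_def cdot_scale mat_scale_mult algebra_simps)

lemma psc_vec_val: "psc_vec w p P \<longleftrightarrow> psc_val w p P = 0" by (simp add: psc_vec_def psc_val_def)

lemma psc_pclass: "psc (pclass v) p P \<longleftrightarrow> psc_vec v p P"
proof
  assume "psc (pclass v) p P" then show "psc_vec v p P" using pclass_self unfolding psc_def by blast
next
  assume a: "psc_vec v p P"
  show "psc (pclass v) p P" unfolding psc_def
  proof
    fix w assume "w \<in> pclass v"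
    then obtain c where "w = pscale c v" by (auto simp: pclass_def)
    then show "psc_vec w p P" using a by (simp add: psc_vec_val psc_val_scale)
  qed
qed



lemma polyfun_sum: "finite S \<Longrightarrow> (\<And>k. k \<in> S \<Longrightarrow> polyfun (g k)) \<Longrightarrow> polyfun (\<lambda>v. \<Sum>k\<in>S. g k v)"
proof (induction S rule: finite_induct)
  case empty then show ?case by (simp add: polyfun.pf_const)
next
  case (insert x F) then show ?case by (simp add: polyfun.pf_add)
qed

lemma polyfun_diff: "polyfun f \<Longrightarrow> polyfun g \<Longrightarrow> polyfun (\<lambda>v. f v - g v)"
proof -
  assume "polyfun f" "polyfun g"
  then have "polyfun (\<lambda>v. f v + (-1) * g v)" by (intro polyfun.pf_add polyfun.pf_mult polyfun.pf_const)
  then show ?thesis by simp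
qed

definition pmap_poly :: "(pt \<Rightarrow> pt) \<Rightarrow> bool" where
  "pmap_poly T \<longleftrightarrow> polyfun (\<lambda>v. ph (T v)) \<and> (\<forall>i j. polyfun (\<lambda>v. pM (T v) $ i $ j)) \<and>
     (\<forall>i. polyfun (\<lambda>v. px (T v) $ i)) \<and> (\<forall>i. polyfun (\<lambda>v. py (T v) $ i)) \<and> polyfun (\<lambda>v. pr (T v))"

lemma polyfun_comp: "polyfun f \<Longrightarrow> pmap_poly T \<Longrightarrow> polyfun (\<lambda>v. f (T v))"
  by (induction rule: polyfun.induct) (auto simp: pmap_poly_def intro: polyfun.intros)

definition hol_pt :: "(complex \<Rightarrow> pt) \<Rightarrow> bool" where
  "hol_pt \<Phi> \<longleftrightarrow> (\<lambda>z. ph (\<Phi> z)) holomorphic_on UNIV \<and> (\<forall>i j. (\<lambda>z. pM (\<Phi> z) $ i $ j) holomorphic_on UNIV) \<and>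
     (\<forall>i. (\<lambda>z. px (\<Phi> z) $ i) holomorphic_on UNIV) \<and> (\<forall>i. (\<lambda>z. py (\<Phi> z) $ i) holomorphic_on UNIV) \<and>
     (\<lambda>z. pr (\<Phi> z)) holomorphic_on UNIV"

lemma polyfun_hol: "polyfun f \<Longrightarrow> hol_pt \<Phi> \<Longrightarrow> (\<lambda>z. f (\<Phi> z)) holomorphic_on UNIV"
  by (induction rule: polyfun.induct) (auto simp: hol_pt_def intro: holomorphic_intros)

lemma Xcone_map:
  assumes "pmap_poly T" "\<And>c w. T (pscale c w) = pscale c (T w)"
    "\<And>M y. M \<in> SO3 \<Longrightarrow> \<exists>M'\<in>SO3. \<exists>y'. T (iso_pt M y) = iso_pt M' y'"
    "\<not> pzero (T v)" "v \<in> Xcone"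
  shows "T v \<in> Xcone"
proof -
  have h: "\<And>f d. polyfun f \<Longrightarrow> homogeneous_of d f \<Longrightarrow> (\<forall>M\<in>SO3. \<forall>y. f (iso_pt M y) = 0) \<Longrightarrow> f v = 0"
    using assms(5) unfolding Xcone_def by blast
  show ?thesis unfolding Xcone_def
  proof (intro CollectI conjI allI impI)
    show "\<not> pzero (T v)" by fact
    fix f d assume a: "polyfun f \<and> homogeneous_of d f \<and> (\<forall>M\<in>SO3. \<forall>y. f (iso_pt M y) = 0)"
    have "polyfun (\<lambda>w. f (T w))" using a assms(1) polyfun_comp by blast
    moreover have "homogeneous_of d (\<lambda>w. f (T w))"
      unfolding homogeneous_of_def
    proof (intro allI)
      fix c w
      have "f (pscale c (T w)) = c^d * f (T w)" using a unfolding homogeneous_of_def by blast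
      then show "f (T (pscale c w)) = c ^ d * f (T w)" using assms(2) by simp
    qed
    moreover have "\<forall>M\<in>SO3. \<forall>y. f (T (iso_pt M y)) = 0"
      using a assms(3) by metis
    ultimately show "f (T v) = 0" using h[of "\<lambda>w. f (T w)" d] by blast
  qed
qed

lemma entire_zero_real:
  assumes "g holomorphic_on UNIV" "\<And>x::real. g (of_real x) = 0" shows "g z = 0"
proof (rule analytic_continuation[OF assms(1), where U="range of_real" and \<xi>=0])
  show "(0::complex) islimpt range of_real"
  proof (rule islimpt_approachable[THEN iffD2], intro allI impI)
    fix e :: real assume "0 < e"
    show "\<exists>x'\<in>range (of_real :: real \<Rightarrow> complex). x' \<noteq> 0 \<and> dist x' 0 < e"
    proof (intro bexI[of _ "complex_of_real (e/2)"] conjI)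
      show "dist (complex_of_real (e/2)) 0 < e" using \<open>0 < e\<close> by (simp add: dist_norm)
    qed (use \<open>0 < e\<close> in \<open>auto intro: rangeI simp del: of_real_divide\<close>)
  qed
qed (use assms in auto)

lemma entire_zero_punct:
  assumes "g holomorphic_on UNIV" "\<And>z. z \<noteq> 0 \<Longrightarrow> z \<noteq> 2 \<Longrightarrow> g z = 0" shows "g 0 = 0"
proof (rule analytic_continuation[OF assms(1), where U="UNIV - {0,2}" and \<xi>=0])
  have "(0::complex) islimpt ({0,2} \<union> (UNIV - {0,2}))" by simp
  then show "(0::complex) islimpt (UNIV - {0,2})" by (subst (asm) islimpt_Un_finite) auto
qed (use assms in auto)



definition Pm :: "'a::comm_ring_1 \<Rightarrow> 'a^3^3" where
  "Pm a = vector [vector [1 - a^2, -2*a, 0], vector [2*a, 1 - a^2, 0], vector [0, 0, 1 + a^2]]"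

lemma Pm_nth: "Pm a $ i $ j = (if i = 1 then (if j = 1 then 1 - a^2 else if j = 2 then -2*a else 0)
   else if i = 2 then (if j = 1 then 2*a else if j = 2 then 1 - a^2 else 0)
   else (if j = 3 then 1 + a^2 else 0))"
  using exhaust_3[of i] exhaust_3[of j] by (auto simp: Pm_def)

definition Rr :: "real \<Rightarrow> real^3^3" where "Rr a = (1 / (1 + a^2)) *\<^sub>R Pm a"

lemma one_plus_sq_pos: "(0::real) < 1 + a^2" by (simp add: add_pos_nonneg)

lemma Rr_SO3: "Rr a \<in> SO3"
proof -
  define c where "c = 1 / (1 + a^2)"
  have hc: "c * (1 + a^2) = 1" unfolding c_def using one_plus_sq_pos[of a] by simp
  have o: "transpose (Rr a) ** Rr a = mat 1"
    unfolding Rr_def c_def[symmetric]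
    apply (simp add: vec_eq_iff forall_3 matrix_matrix_mult_def transpose_def mat_def sum_3 Pm_nth)
    using hc apply algebra
    done
  have "det (Rr a) = 1"
    unfolding Rr_def c_def[symmetric]
    apply (simp add: det_3 Pm_nth)
    using hc apply algebra
    done
  then show ?thesis using o by (simp add: SO3_def orthogonal_matrix)
qed

lemma iso_parts: "ph (iso_pt M y) = 1" "pM (iso_pt M y) = cmat M" "px (iso_pt M y) = cvec (- (transpose M *v y))"
  "py (iso_pt M y) = cvec y" "pr (iso_pt M y) = complex_of_real (y \<bullet> y)"
  by (simp_all add: iso_pt_def ph_def pM_def px_def py_def pr_def)

lemma homog_apply: "homogeneous_of d f \<Longrightarrow> f (pscale c v) = c ^ d * f v"
  unfolding homogeneous_of_def by blast

definition Psi :: "complex \<Rightarrow> complex^3 \<Rightarrow> pt" where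
  "Psi a y = (1 + a^2, Pm a, - (transpose (Pm a) *v y), (1 + a^2) *s y, (1 + a^2) * cdot y y)"

lemma Psi_parts: "ph (Psi a y) = 1 + a^2" "pM (Psi a y) = Pm a" "px (Psi a y) = - (transpose (Pm a) *v y)"
  "py (Psi a y) = (1 + a^2) *s y" "pr (Psi a y) = (1 + a^2) * cdot y y"
  by (simp_all add: Psi_def ph_def pM_def px_def py_def pr_def)

lemma Psi_real: "Psi (of_real a) (cvec y) = pscale (of_real (1 + a^2)) (iso_pt (Rr a) y)"
proof -
  define c where "c = 1 / (1 + a^2)"
  have hc: "c * (1 + a^2) = 1" unfolding c_def using one_plus_sq_pos[of a] by simp
  then have hc': "complex_of_real c * (1 + (complex_of_real a)^2) = 1"
    by (metis of_real_1 of_real_add of_real_mult of_real_power)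
  show ?thesis
    unfolding pt_eq_iff Rr_def c_def[symmetric]
    apply (simp add: Psi_parts iso_parts cmat_def cvec_def
       vec_eq_iff forall_3 Pm_nth matrix_vector_mult_def transpose_def sum_3 cdot_def inner_vec_def)
    apply (intro conjI)
    apply (((rule disjI2)?, insert hc', algebra))+
    done
qed

lemma Psi_real_zero:
  assumes "homogeneous_of d f" "\<forall>M\<in>SO3. \<forall>y. f (iso_pt M y) = 0"
  shows "f (Psi (of_real a) (cvec y)) = 0"
  using assms Rr_SO3 unfolding Psi_real by (simp add: homog_apply)

lemma Pm_hol: "A holomorphic_on UNIV \<Longrightarrow> (\<lambda>z. Pm (A z) $ i $ j) holomorphic_on UNIV"
  using exhaust_3[of i] exhaust_3[of j] by (auto simp: Pm_def intro!: holomorphic_intros)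

lemma Psi_hol:
  assumes "A holomorphic_on UNIV" "\<And>i. (\<lambda>z. Y z $ i) holomorphic_on UNIV"
  shows "hol_pt (\<lambda>z. Psi (A z) (Y z))"
  unfolding hol_pt_def Psi_parts using assms
  by (auto simp: matrix_vector_mult_def transpose_def sum_3 cdot_def intro!: Pm_hol holomorphic_intros)



lemma vec3_hol: "Y1 holomorphic_on UNIV \<Longrightarrow> Y2 holomorphic_on UNIV \<Longrightarrow> Y3 holomorphic_on UNIV \<Longrightarrow>
   (\<lambda>z. (vector [Y1 z, Y2 z, Y3 z] :: complex^3) $ i) holomorphic_on UNIV"
  using exhaust_3[of i] by auto

lemma F_hol:
  assumes "polyfun f" "A holomorphic_on UNIV" "Y1 holomorphic_on UNIV" "Y2 holomorphic_on UNIV" "Y3 holomorphic_on UNIV"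
  shows "(\<lambda>z. f (Psi (A z) (vector [Y1 z, Y2 z, Y3 z]))) holomorphic_on UNIV"
  by (rule polyfun_hol[OF assms(1)], rule Psi_hol) (use assms vec3_hol in auto)

lemma cvec_vector: "cvec (vector [a, b, c]) = vector [of_real a, of_real b, of_real c]"
  by (simp add: cvec_def vec_eq_iff forall_3)

lemma Psi_zero:
  assumes "polyfun f" "homogeneous_of d f" "\<forall>M\<in>SO3. \<forall>y. f (iso_pt M y) = 0"
  shows "f (Psi a y) = 0"
proof -
  define F where "F a y1 y2 y3 = f (Psi a (vector [y1, y2, y3]))" for a y1 y2 y3
  have S0: "F (of_real a) (of_real y1) (of_real y2) (of_real y3) = 0" for a y1 y2 y3
    using Psi_real_zero[OF assms(2,3), of a "vector [y1,y2,y3]"] by (simp add: F_def cvec_vector)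
  have S1: "F (of_real a) z1 (of_real y2) (of_real y3) = 0" for a z1 y2 y3
    by (rule entire_zero_real[where g="\<lambda>z. F (of_real a) z (of_real y2) (of_real y3)"])
      (unfold F_def, rule F_hol[OF assms(1)], auto intro: S0[unfolded F_def])
  have S2: "F (of_real a) z1 z2 (of_real y3) = 0" for a z1 z2 y3
    by (rule entire_zero_real[where g="\<lambda>z. F (of_real a) z1 z (of_real y3)"])
      (unfold F_def, rule F_hol[OF assms(1)], auto intro: S1[unfolded F_def])
  have S3: "F (of_real a) z1 z2 z3 = 0" for a z1 z2 z3
    by (rule entire_zero_real[where g="\<lambda>z. F (of_real a) z1 z2 z"])
      (unfold F_def, rule F_hol[OF assms(1)], auto intro: S2[unfolded F_def])
  have S4: "F a z1 z2 z3 = 0" for a z1 z2 z3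
    by (rule entire_zero_real[where g="\<lambda>z. F z z1 z2 z3"])
      (unfold F_def, rule F_hol[OF assms(1)], auto intro: S3[unfolded F_def])
  have "y = vector [y$1, y$2, y$3]" by (simp add: vec_eq_iff forall_3)
  then show ?thesis using S4[of a "y$1" "y$2" "y$3"] unfolding F_def by metis
qed



definition Phi :: "complex \<Rightarrow> complex \<Rightarrow> pt" where
  "Phi \<rho> s = (s^2 * (2-s)^2, (\<chi> i j. s * (2-s) * Pm (-\<i> * (1-s)) $ i $ j),
      vector [2 - s, \<i> * (2 - s), - s * (2 - s) * \<rho>], vector [- s, - \<i> * s, s * (2 - s) * \<rho>], \<rho>^2)"

lemma Phi_parts: "ph (Phi \<rho> s) = s^2 * (2-s)^2" "pM (Phi \<rho> s) = (\<chi> i j. s * (2-s) * Pm (-\<i> * (1-s)) $ i $ j)"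
  "px (Phi \<rho> s) = vector [2 - s, \<i> * (2 - s), - s * (2 - s) * \<rho>]"
  "py (Phi \<rho> s) = vector [- s, - \<i> * s, s * (2 - s) * \<rho>]" "pr (Phi \<rho> s) = \<rho>^2"
  by (simp_all add: Phi_def ph_def pM_def px_def py_def pr_def)

lemma Phi_eq:
  assumes "s \<noteq> 0" "s \<noteq> 2"
  shows "Phi \<rho> s = pscale (s * (2 - s)) (Psi (-\<i> * (1-s))
            (vector [- 1 / (s * (2-s)^2), - \<i> / (s * (2-s)^2), \<rho> / (s * (2 - s))]))"
proof -
  define k where "k = 1 / s"
  define m where "m = 1 / (2 - s)"
  have hk: "k * s = 1" using assms by (simp add: k_def)
  have hm: "m * (2 - s) = 1" using assms by (simp add: m_def)
  have e: "vector [- 1 / (s * (2-s)^2), - \<i> / (s * (2-s)^2), \<rho> / (s * (2 - s))] =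
      (vector [- k * m * m, - \<i> * k * m * m, \<rho> * k * m] :: complex^3)"
    by (simp add: k_def m_def power2_eq_square mult.assoc)
  have ii: "\<i> * \<i> = -1" by simp
  show ?thesis
    unfolding e pt_eq_iff
    apply (simp add: Psi_parts Phi_parts vec_eq_iff forall_3 Pm_nth matrix_vector_mult_def transpose_def
      sum_3 cdot_def)
    apply (intro conjI)
    apply (((rule disjI2)?, insert hk hm ii, algebra))+
    done
qed

lemma Phi_hol: "hol_pt (Phi \<rho>)"
  unfolding hol_pt_def Phi_parts
  by (auto intro!: holomorphic_intros Pm_hol vec3_hol)

lemma base_point_Xcone: "((0, 0, vector [2, 2 * \<i>, 0], 0, r) :: pt) \<in> Xcone"
proof -
  define \<rho> where "\<rho> = csqrt r"
  have Phi0: "Phi \<rho> 0 = (0, 0, vector [2, 2 * \<i>, 0], 0, r)"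
    by (simp add: Phi_def \<rho>_def vec_eq_iff forall_3)
  show ?thesis unfolding Xcone_def
  proof (intro CollectI conjI allI impI)
    show "\<not> pzero ((0, 0, vector [2, 2 * \<i>, 0], 0, r) :: pt)"
      by (simp add: pzero_def px_def vec_eq_iff forall_3)
    fix f d assume a: "polyfun f \<and> homogeneous_of d f \<and> (\<forall>M\<in>SO3. \<forall>y. f (iso_pt M y) = 0)"
    have "f (Phi \<rho> 0) = 0"
    proof (rule entire_zero_punct)
      show "(\<lambda>s. f (Phi \<rho> s)) holomorphic_on UNIV" using a polyfun_hol Phi_hol by blast
      fix s :: complex assume "s \<noteq> 0" "s \<noteq> 2"
      have hf: "homogeneous_of d f" "polyfun f" "\<forall>M\<in>SO3. \<forall>y. f (iso_pt M y) = 0" using a by blast+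
      show "f (Phi \<rho> s) = 0" using \<open>s \<noteq> 0\<close> \<open>s \<noteq> 2\<close>
        by (simp add: Phi_eq homog_apply[OF hf(1)] Psi_zero[OF hf(2,1,3)])
    qed
    then show "f (0, 0, vector [2, 2 * \<i>, 0], 0, r) = 0" using Phi0 by simp
  qed
qed



lemma cvec_neg: "cvec (- z) = - cvec z" by (simp add: cvec_def vec_eq_iff)

lemma cmat_mult_cvec: "cmat Q *v cvec z = cvec (Q *v z)"
  by (simp add: cmat_def cvec_def vec_eq_iff matrix_vector_mult_def)

lemma cmat_mult: "cmat A ** cmat B = cmat (A ** B)"
  by (simp add: cmat_def vec_eq_iff matrix_matrix_mult_def)

lemma cmat_transpose: "transpose (cmat A) = cmat (transpose A)"
  by (simp add: cmat_def vec_eq_iff transpose_def)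

lemma mvneg: "(A::'a::comm_ring_1^'n^'m) *v (- z) = - (A *v z)"
  by (simp add: vec_eq_iff matrix_vector_mult_def sum_negf)

lemma orth_dot: fixes A :: "real^'n^'n" and y :: "real^'n" assumes "orthogonal_matrix A" shows "(A *v y) \<bullet> (A *v y) = y \<bullet> y"
proof -
  have "(A *v y) \<bullet> (A *v y) = (y v* transpose A) \<bullet> (A *v y)"
    by simp
  also have "\<dots> = y \<bullet> (transpose A *v (A *v y))" by (rule dot_lmul_matrix)
  also have "\<dots> = y \<bullet> y" using assms
    by (simp add: matrix_vector_mul_assoc orthogonal_matrix_def)
  finally show ?thesis .
qed

lemma scale_mm: "(\<chi> i j. c * (M::complex^3^3) $ i $ j) ** B = (\<chi> i j. c * (M ** B) $ i $ j)"
  by (simp add: vec_eq_iff matrix_matrix_mult_def sum_distrib_left mult.assoc)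

lemma scale_mv: "(A::complex^3^3) *v (c *s x) = c *s (A *v x)"
  by (simp add: vec_eq_iff matrix_vector_mult_def sum_distrib_left mult.left_commute)

definition TQ :: "real^3^3 \<Rightarrow> pt \<Rightarrow> pt" where
  "TQ Q v = (ph v, pM v ** transpose (cmat Q), cmat Q *v px v, py v, pr v)"

lemma TQ_parts: "ph (TQ Q v) = ph v" "pM (TQ Q v) = pM v ** transpose (cmat Q)" "px (TQ Q v) = cmat Q *v px v"
  "py (TQ Q v) = py v" "pr (TQ Q v) = pr v"
  by (simp_all add: TQ_def ph_def pM_def px_def py_def pr_def)

lemma TQ_poly: "pmap_poly (TQ Q)"
  unfolding pmap_poly_def TQ_parts matrix_matrix_mult_def matrix_vector_mult_def vec_lambda_beta
proof (intro conjI allI)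
  show "polyfun (\<lambda>v. ph v)" by (rule polyfun.pf_h)
  show "polyfun (\<lambda>v. py v $ i)" for i by (rule polyfun.pf_y)
  show "polyfun (\<lambda>v. pr v)" by (rule polyfun.pf_r)
  show "polyfun (\<lambda>v. \<Sum>k\<in>UNIV. pM v $ i $ k * transpose (cmat Q) $ k $ j)" for i j
    by (rule polyfun_sum[OF finite], rule polyfun.pf_mult[OF polyfun.pf_M polyfun.pf_const])
  show "polyfun (\<lambda>v. \<Sum>j\<in>UNIV. cmat Q $ i $ j * px v $ j)" for i
    by (rule polyfun_sum[OF finite], rule polyfun.pf_mult[OF polyfun.pf_const polyfun.pf_x])
qed

lemma TQ_scale: "TQ Q (pscale c w) = pscale c (TQ Q w)"
  unfolding pt_eq_iff
  by (simp add: TQ_parts scale_mm scale_mv)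

lemma TQ_iso: assumes "Q \<in> SO3" "M \<in> SO3" shows "\<exists>M'\<in>SO3. \<exists>y'. TQ Q (iso_pt M y) = iso_pt M' y'"
proof (intro bexI exI)
  show "TQ Q (iso_pt M y) = iso_pt (M ** transpose Q) y"
  proof -
    have e: "transpose (M ** transpose Q) *v y = Q *v (transpose M *v y)"
      by (simp only: matrix_transpose_mul transpose_transpose matrix_vector_mul_assoc)
    show ?thesis
      unfolding pt_eq_iff TQ_parts iso_parts e
      by (simp only: cmat_transpose cmat_mult cmat_mult_cvec cvec_neg mvneg)
  qed
  show "M ** transpose Q \<in> SO3" using assms
    by (simp add: SO3_def orthogonal_matrix_mul det_mul)
qed

lemma TQ_Xcone: assumes "Q \<in> SO3" "v \<in> Xcone" "\<not> pzero (TQ Q v)" shows "TQ Q v \<in> Xcone"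
  by (rule Xcone_map[OF TQ_poly TQ_scale TQ_iso[OF assms(1)] assms(3,2)])

definition SW :: "pt \<Rightarrow> pt" where
  "SW v = (ph v, transpose (pM v), py v, px v, pr v)"

lemma SW_parts: "ph (SW v) = ph v" "pM (SW v) = transpose (pM v)" "px (SW v) = py v"
  "py (SW v) = px v" "pr (SW v) = pr v"
  by (simp_all add: SW_def ph_def pM_def px_def py_def pr_def)

lemma SW_poly: "pmap_poly SW"
  unfolding pmap_poly_def SW_parts transpose_def vec_lambda_beta
  by (intro conjI allI polyfun.pf_h polyfun.pf_M polyfun.pf_x polyfun.pf_y polyfun.pf_r)

lemma SW_scale: "SW (pscale c w) = pscale c (SW w)"
  unfolding pt_eq_iff by (simp add: SW_parts vec_eq_iff transpose_def)

lemma SW_iso: assumes "M \<in> SO3" shows "\<exists>M'\<in>SO3. \<exists>y'. SW (iso_pt M y) = iso_pt M' y'"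
proof (intro bexI exI)
  have o: "orthogonal_matrix M" using assms by (simp add: SO3_def)
  show "SW (iso_pt M y) = iso_pt (transpose M) (- (transpose M *v y))"
  proof -
    have e: "- (transpose (transpose M) *v - (transpose M *v y)) = y"
      using o by (simp only: transpose_transpose mvneg minus_minus matrix_vector_mul_assoc
         orthogonal_matrix_def matrix_vector_mul_lid)
    have o2: "orthogonal_matrix (transpose M)" using o by simp
    have r: "(-(transpose M *v y)) \<bullet> (-(transpose M *v y)) = y \<bullet> y"
      by (simp only: inner_minus_left inner_minus_right minus_minus orth_dot[OF o2])
    show ?thesis
      unfolding pt_eq_iff SW_parts iso_parts e r
      by (simp only: cmat_transpose cvec_neg minus_minus)
  qed
  show "transpose M \<in> SO3" using assms by (simp add: SO3_def)
qed

lemma SW_Xcone: assumes "v \<in> Xcone" shows "SW v \<in> Xcone"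
proof (rule Xcone_map[OF SW_poly SW_scale SW_iso _ assms])
  have nz: "\<not> pzero v" using assms unfolding Xcone_def by blast
  have t: "transpose (pM v) = 0 \<longleftrightarrow> pM v = 0"
    by (auto simp: vec_eq_iff transpose_def)
  show "\<not> pzero (SW v)" using nz unfolding pzero_def SW_parts t by blast
qed

lemma SW_SW[simp]: "SW (SW v) = v" unfolding pt_eq_iff SW_parts by simp

lemma Xcone_iso_x:
  assumes "v \<in> Xcone" "ph v = 0" shows "cdot (px v) (px v) = 0"
proof -
  define f where "f w = px w $ 1 * px w $ 1 + px w $ 2 * px w $ 2 + px w $ 3 * px w $ 3 - ph w * pr w" for w
  have "polyfun f" unfolding f_def
    by (rule polyfun_diff polyfun.pf_add polyfun.pf_mult polyfun.pf_x polyfun.pf_h polyfun.pf_r)+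
  moreover have "homogeneous_of 2 f" unfolding homogeneous_of_def f_def
    by (simp add: power2_eq_square algebra_simps)
  moreover have "\<forall>M\<in>SO3. \<forall>y. f (iso_pt M y) = 0"
  proof (intro ballI allI)
    fix M y assume "M \<in> SO3"
    then have o: "orthogonal_matrix (transpose M)" by (simp add: SO3_def)
    have "(transpose M *v y) \<bullet> (transpose M *v y) = y \<bullet> y" by (rule orth_dot[OF o])
    then have "complex_of_real ((transpose M *v y) \<bullet> (transpose M *v y)) = complex_of_real (y \<bullet> y)" by simp
    then show "f (iso_pt M y) = 0" unfolding f_def iso_parts
      by (simp add: cvec_def inner_vec_def sum_3 power2_eq_square)
  qed
  moreover have h: "\<And>f d. polyfun f \<Longrightarrow> homogeneous_of d f \<Longrightarrow> (\<forall>M\<in>SO3. \<forall>y. f (iso_pt M y) = 0) \<Longrightarrow> f v = 0"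
    using assms(1) unfolding Xcone_def by blast
  ultimately have "f v = 0" by blast
  then show ?thesis using assms(2) by (simp add: f_def cdot_def sum_3)
qed



definition rea :: "complex^3 \<Rightarrow> real^3" where "rea x = (\<chi> i. Re (x $ i))"
definition ima :: "complex^3 \<Rightarrow> real^3" where "ima x = (\<chi> i. Im (x $ i))"

lemma x_decomp: "x = cvec (rea x) + \<i> *s cvec (ima x)"
  by (simp add: vec_eq_iff rea_def ima_def cvec_def complex_eq_iff)

lemma iso_real:
  assumes "cdot x x = 0"
  shows "rea x \<bullet> rea x = ima x \<bullet> ima x" "rea x \<bullet> ima x = 0"
proof -
  have "Re (cdot x x) = 0" "Im (cdot x x) = 0" using assms by simp_all
  then show "rea x \<bullet> rea x = ima x \<bullet> ima x" "rea x \<bullet> ima x = 0"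
    by (simp_all add: cdot_def sum_3 rea_def ima_def inner_vec_def power2_eq_square algebra_simps)
qed

lemma rea_nz: assumes "cdot x x = 0" "x \<noteq> 0" shows "rea x \<noteq> 0"
proof
  assume "rea x = 0"
  then have "ima x \<bullet> ima x = 0" using iso_real(1)[OF assms(1)] by simp
  then have "ima x = 0" by simp
  with \<open>rea x = 0\<close> have "x = 0" by (subst x_decomp) (simp add: cvec_def vec_eq_iff)
  with assms(2) show False by simp
qed

lemma triple_self: "(x::real^3) \<bullet> cross3 y (cross3 x y) = (x \<bullet> x) * (y \<bullet> y) - (x \<bullet> y)^2"
  by (simp add: cross3_simps power2_eq_square)

lemma frame_SO3:
  assumes "e1 \<bullet> e1 = 1" "e2 \<bullet> e2 = 1" "e1 \<bullet> e2 = 0"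
  shows "transpose (vector [e1, e2, cross3 e1 e2] :: real^3^3) \<in> SO3"
proof -
  let ?e3 = "cross3 e1 e2"
  have n3: "?e3 \<bullet> ?e3 = 1"
    using norm_cross_dot[of e1 e2] assms by (simp add: power2_norm_eq_inner[symmetric] norm_eq_1[symmetric] power_mult_distrib)
  have o13: "e1 \<bullet> ?e3 = 0" "e2 \<bullet> ?e3 = 0" by (simp_all add: dot_cross_self)
  have "vector [e1, e2, ?e3] ** transpose (vector [e1, e2, ?e3] :: real^3^3) = mat 1"
    using assms n3 o13
    by (simp add: vec_eq_iff forall_3 matrix_matrix_mult_def transpose_def mat_def inner_vec_def
       inner_real_def mult.commute)
  then have o: "orthogonal_matrix (transpose (vector [e1, e2, ?e3] :: real^3^3))"
    by (simp add: orthogonal_matrix)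
  have "det (vector [e1, e2, ?e3] :: real^3^3) = e1 \<bullet> cross3 e2 ?e3" by (simp add: dot_cross_det)
  also have "\<dots> = 1" using triple_self[of e1 e2] assms by simp
  finally show ?thesis using o by (simp add: SO3_def)
qed

lemma frame_mv: "cmat (transpose (vector [u1, u2, u3] :: real^3^3)) *v vector [c1, c2, c3] =
   c1 *s cvec u1 + c2 *s cvec u2 + c3 *s cvec u3"
  by (simp add: vec_eq_iff matrix_vector_mult_def sum_3 cmat_def transpose_def cvec_def)

lemma left_point_Xcone:
  assumes "cdot x x = 0" "x \<noteq> 0"
  shows "((0, 0, x, 0, r) :: pt) \<in> Xcone"
proof -
  define a where "a = rea x"
  define b where "b = ima x"
  define \<rho> where "\<rho> = norm a"
  have anz: "a \<noteq> 0" using rea_nz[OF assms] by (simp add: a_def)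
  then have rpos: "\<rho> > 0" by (simp add: \<rho>_def)
  have aa: "a \<bullet> a = \<rho>^2" by (simp add: \<rho>_def power2_norm_eq_inner)
  have bb: "b \<bullet> b = \<rho>^2" using iso_real(1)[OF assms(1)] aa by (simp add: a_def b_def)
  have ab: "a \<bullet> b = 0" using iso_real(2)[OF assms(1)] by (simp add: a_def b_def)
  define e1 where "e1 = (1/\<rho>) *\<^sub>R a"
  define e2 where "e2 = (1/\<rho>) *\<^sub>R b"
  have h1: "e1 \<bullet> e1 = 1" using aa rpos by (simp add: e1_def power2_eq_square)
  have h2: "e2 \<bullet> e2 = 1" using bb rpos by (simp add: e2_def power2_eq_square)
  have h12: "e1 \<bullet> e2 = 0" using ab by (simp add: e1_def e2_def)
  define Q where "Q = transpose (vector [e1, e2, cross3 e1 e2] :: real^3^3)"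
  have QS: "Q \<in> SO3" unfolding Q_def by (rule frame_SO3[OF h1 h2 h12])
  define r' where "r' = 2 * r / complex_of_real \<rho>"
  define base where "base = ((0, 0, vector [2, 2 * \<i>, 0], 0, r') :: pt)"
  have bX: "base \<in> Xcone" unfolding base_def by (rule base_point_Xcone)
  have xq: "cmat Q *v vector [2, 2 * \<i>, 0] = complex_of_real (2 / \<rho>) *s x"
    unfolding Q_def frame_mv
    using rpos by (simp add: vec_eq_iff e1_def e2_def a_def b_def rea_def ima_def cvec_def complex_eq_iff)
  have TB: "TQ Q base = ((0, 0, complex_of_real (2 / \<rho>) *s x, 0, r') :: pt)"
    unfolding pt_eq_iff TQ_parts using xq by (simp add: base_def ph_def pM_def px_def py_def pr_def)
  have nzT: "\<not> pzero (TQ Q base)"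
    using assms(2) rpos unfolding TB by (simp add: pzero_def px_def vec_eq_iff)
  have "TQ Q base \<in> Xcone" by (rule TQ_Xcone[OF QS bX nzT])
  then have "pscale (complex_of_real (\<rho> / 2)) (TQ Q base) \<in> Xcone"
    by (rule Xcone_scale) (use rpos in simp)
  moreover have "pscale (complex_of_real (\<rho> / 2)) (TQ Q base) = ((0, 0, x, 0, r) :: pt)"
    unfolding TB pt_eq_iff pscale_parts using rpos
    by (simp add: ph_def pM_def px_def py_def pr_def r'_def vec_eq_iff)
  ultimately show ?thesis by simp
qed

lemma right_point_Xcone:
  assumes "cdot y y = 0" "y \<noteq> 0"
  shows "((0, 0, 0, y, r) :: pt) \<in> Xcone"
proof -
  have "SW (0, 0, y, 0, r) \<in> Xcone" by (rule SW_Xcone[OF left_point_Xcone[OF assms]])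
  moreover have "SW (0, 0, y, 0, r) = ((0, 0, 0, y, r) :: pt)"
    by (simp add: SW_def ph_def pM_def px_def py_def pr_def vec_eq_iff transpose_def)
  ultimately show ?thesis by simp
qed

lemma Xcone_iso_y:
  assumes "v \<in> Xcone" "ph v = 0" shows "cdot (py v) (py v) = 0"
  using Xcone_iso_x[OF SW_Xcone[OF assms(1)]] assms(2) by (simp add: SW_parts)



lemma cross_cross_r: "cross3 x (cross3 y z) = (x \<bullet> z) *\<^sub>R y - (x \<bullet> y) *\<^sub>R z"
  by (simp add: cross3_simps forall_3)

lemma cross_cross_l: "cross3 (cross3 x y) z = (x \<bullet> z) *\<^sub>R y - (y \<bullet> z) *\<^sub>R x"
  by (simp add: cross3_simps forall_3)

lemma frame_expand:
  assumes "e1 \<bullet> e1 = 1" "e2 \<bullet> e2 = 1" "e1 \<bullet> e2 = 0"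
  shows "w = (w \<bullet> e1) *\<^sub>R e1 + (w \<bullet> e2) *\<^sub>R e2 + (w \<bullet> cross3 e1 e2) *\<^sub>R cross3 e1 e2"
proof -
  define Q where "Q = transpose (vector [e1, e2, cross3 e1 e2] :: real^3^3)"
  have "Q \<in> SO3" unfolding Q_def by (rule frame_SO3[OF assms])
  then have "Q ** transpose Q = mat 1" by (simp add: SO3_def orthogonal_matrix_def)
  then have "w = Q *v (transpose Q *v w)" by (simp only: matrix_vector_mul_assoc matrix_vector_mul_lid)
  also have "\<dots> = (w \<bullet> e1) *\<^sub>R e1 + (w \<bullet> e2) *\<^sub>R e2 + (w \<bullet> cross3 e1 e2) *\<^sub>R cross3 e1 e2"
    unfolding Q_def
    by (simp add: vec_eq_iff matrix_vector_mult_def sum_3 transpose_def inner_vec_def mult.commute)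
  finally show ?thesis .
qed

lemma unit_perp_exists: "\<exists>a::real^3. a \<bullet> a = 1 \<and> a \<bullet> d = 0"
proof (cases "d $ 1 = 0 \<and> d $ 2 = 0")
  case True
  then show ?thesis
    by (intro exI[of _ "vector [1, 0, 0]"]) (simp add: inner_vec_def sum_3)
next
  case False
  define n where "n = sqrt ((d$1)^2 + (d$2)^2)"
  have "(d$1)^2 + (d$2)^2 > 0" using False by (auto simp: add_pos_nonneg add_nonneg_pos)
  then have n: "n > 0" "n^2 = (d$1)^2 + (d$2)^2" by (simp_all add: n_def)
  have "0 < d$1*d$1 + d$2*d$2" using \<open>(d$1)^2 + (d$2)^2 > 0\<close> by (simp only: power2_eq_square)
  then have nz: "d$1*d$1 + d$2*d$2 \<noteq> 0" by linarith
  define v where "v = (vector [- d$2 / n, d$1 / n, 0] :: real^3)"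
  have "v \<bullet> v = ((d$1)^2 + (d$2)^2) / n^2"
    by (simp add: v_def inner_vec_def sum_3 power_divide add_divide_distrib power2_eq_square)
  then have "v \<bullet> v = 1" using n False by simp
  moreover have "v \<bullet> d = 0" by (simp add: v_def inner_vec_def sum_3 algebra_simps)
  ultimately show ?thesis by blast
qed

definition fr1 :: "real^3 \<Rightarrow> real^3" where "fr1 d = (SOME a. a \<bullet> a = 1 \<and> a \<bullet> d = 0)"

lemma fr1: "fr1 d \<bullet> fr1 d = 1" "fr1 d \<bullet> d = 0"
  using someI_ex[OF unit_perp_exists[of d]] by (simp_all add: fr1_def)

lemma frame_facts:
  assumes "norm d = 1" "a \<bullet> a = 1" "a \<bullet> d = 0"
  shows "cross3 d a \<bullet> cross3 d a = 1" "a \<bullet> cross3 d a = 0" "d \<bullet> cross3 d a = 0"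
    "cross3 a (cross3 d a) = d"
proof -
  have dd: "d \<bullet> d = 1" using assms(1) by (simp add: norm_eq_1)
  have "(norm (cross3 d a))^2 + (d \<bullet> a)^2 = (norm d * norm a)^2" by (rule norm_cross_dot)
  moreover have "norm a = 1" using assms(2) by (simp add: norm_eq_1)
  ultimately show "cross3 d a \<bullet> cross3 d a = 1" using assms by (simp add: power2_norm_eq_inner inner_commute)
  show "a \<bullet> cross3 d a = 0" "d \<bullet> cross3 d a = 0" by (simp_all add: dot_cross_self)
  show "cross3 a (cross3 d a) = d" using assms dd by (simp add: cross_cross_r inner_commute)
qed

definition Xl :: "real^3 \<Rightarrow> complex^3" where
  "Xl d = cvec (fr1 d) + \<i> *s cvec (cross3 d (fr1 d))"

definition qpt :: "(real^3) set \<Rightarrow> real^3 \<Rightarrow> real^3" where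
  "qpt L d = (SOME q. L = {q + t *\<^sub>R d | t. True})"

definition Rl :: "(real^3) set \<Rightarrow> real^3 \<Rightarrow> complex" where
  "Rl L d = 2 * cdot (cvec (qpt L d)) (Xl d)"

lemma cdot_cvec_X: "cdot (cvec w) (cvec a + \<i> *s cvec b) = complex_of_real (w \<bullet> a) + \<i> * complex_of_real (w \<bullet> b)"
  by (simp add: cdot_def sum_3 cvec_def inner_vec_def algebra_simps)

lemma cdot_X_X: "cdot (cvec a + \<i> *s cvec b) (cvec a + \<i> *s cvec b) =
   complex_of_real (a \<bullet> a - b \<bullet> b) + \<i> * complex_of_real (2 * (a \<bullet> b))"
  by (simp add: cdot_def sum_3 cvec_def inner_vec_def algebra_simps power2_eq_square)

lemma rea_X: "rea (cvec a + \<i> *s cvec b) = a" and ima_X: "ima (cvec a + \<i> *s cvec b) = b"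
  by (simp_all add: rea_def ima_def cvec_def vec_eq_iff)

lemma Xl_iso: assumes "norm d = 1" shows "cdot (Xl d) (Xl d) = 0" "Xl d \<noteq> 0"
proof -
  note f = frame_facts[OF assms fr1]
  show "cdot (Xl d) (Xl d) = 0" unfolding Xl_def cdot_X_X using f fr1 by simp
  show "Xl d \<noteq> 0"
  proof
    assume "Xl d = 0"
    moreover have "rea (Xl d) = fr1 d" unfolding Xl_def by (rule rea_X)
    ultimately have "fr1 d = 0" by (simp add: rea_def vec_eq_iff)
    then show False using fr1(1)[of d] by simp
  qed
qed

lemma line_iff:
  assumes "(L, d) \<in> oriented_lines"
  shows "Rl L d - 2 * cdot (cvec p) (Xl d) = 0 \<longleftrightarrow> p \<in> L"
proof -
  have nd: "norm d = 1" and ex: "\<exists>q. L = {q + t *\<^sub>R d | t. True}" using assms by (auto simp: oriented_lines_def)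
  define q where "q = qpt L d"
  have L: "L = {q + t *\<^sub>R d | t. True}" using someI_ex[OF ex] by (simp add: q_def qpt_def)
  define a where "a = fr1 d"
  define b where "b = cross3 d a"
  have aa: "a \<bullet> a = 1" and ad: "a \<bullet> d = 0" using fr1 by (simp_all add: a_def)
  note f = frame_facts[OF nd aa ad, folded b_def]
  have e: "Rl L d - 2 * cdot (cvec p) (Xl d) = 2 * (complex_of_real ((q - p) \<bullet> a) + \<i> * complex_of_real ((q - p) \<bullet> b))"
    unfolding Rl_def q_def[symmetric] Xl_def a_def[symmetric] b_def[symmetric] cdot_cvec_X
    by (simp add: inner_diff_left algebra_simps)
  have "Rl L d - 2 * cdot (cvec p) (Xl d) = 0 \<longleftrightarrow> (q - p) \<bullet> a = 0 \<and> (q - p) \<bullet> b = 0"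
    unfolding e by (simp add: complex_eq_iff)
  also have "\<dots> \<longleftrightarrow> p \<in> L"
  proof
    assume h: "(q - p) \<bullet> a = 0 \<and> (q - p) \<bullet> b = 0"
    have "q - p = ((q - p) \<bullet> a) *\<^sub>R a + ((q - p) \<bullet> b) *\<^sub>R b + ((q - p) \<bullet> cross3 a b) *\<^sub>R cross3 a b"
      by (rule frame_expand) (use aa f in \<open>simp_all add: inner_commute\<close>)
    then have "q - p = ((q - p) \<bullet> d) *\<^sub>R d" using h f by simp
    then have "p = q + (- ((q - p) \<bullet> d)) *\<^sub>R d" by (simp add: algebra_simps)
    then show "p \<in> L" unfolding L by blast
  next
    assume "p \<in> L"
    then obtain t where "p = q + t *\<^sub>R d" unfolding L by blast
    then show "(q - p) \<bullet> a = 0 \<and> (q - p) \<bullet> b = 0"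
      using ad f by (simp add: inner_commute)
  qed
  finally show ?thesis .
qed



lemma rea_scale: "rea (c *s (cvec a + \<i> *s cvec b)) = Re c *\<^sub>R a - Im c *\<^sub>R b"
  and ima_scale: "ima (c *s (cvec a + \<i> *s cvec b)) = Im c *\<^sub>R a + Re c *\<^sub>R b"
  by (simp_all add: rea_def ima_def cvec_def vec_eq_iff)

lemma cross_rot: "cross3 (\<alpha> *\<^sub>R a - \<beta> *\<^sub>R b) (\<beta> *\<^sub>R a + \<alpha> *\<^sub>R b) = (\<alpha>^2 + \<beta>^2) *\<^sub>R cross3 a b"
  by (simp add: cross3_simps forall_3 power2_eq_square)

lemma line_inj:
  assumes l1: "(L1, d1) \<in> oriented_lines" and l2: "(L2, d2) \<in> oriented_lines"
    and X: "Xl d1 = c *s Xl d2" and R: "Rl L1 d1 = c * Rl L2 d2" and c: "c \<noteq> 0"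
  shows "L1 = L2 \<and> d1 = d2"
proof
  show "L1 = L2"
  proof (intro set_eqI)
    fix p
    have "p \<in> L1 \<longleftrightarrow> Rl L1 d1 - 2 * cdot (cvec p) (Xl d1) = 0" using line_iff[OF l1] by simp
    also have "\<dots> \<longleftrightarrow> c * (Rl L2 d2 - 2 * cdot (cvec p) (Xl d2)) = 0"
      unfolding X R by (simp add: cdot_scale algebra_simps)
    also have "\<dots> \<longleftrightarrow> p \<in> L2" using line_iff[OF l2] c by simp
    finally show "p \<in> L1 \<longleftrightarrow> p \<in> L2" .
  qed
  have n1: "norm d1 = 1" and n2: "norm d2 = 1" using l1 l2 by (auto simp: oriented_lines_def)
  define a2 where "a2 = fr1 d2"
  define b2 where "b2 = cross3 d2 a2"
  have c2: "cross3 a2 b2 = d2" unfolding b2_def a2_def by (rule frame_facts(4)[OF n2 fr1])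
  have c1: "cross3 (fr1 d1) (cross3 d1 (fr1 d1)) = d1" by (rule frame_facts(4)[OF n1 fr1])
  have "rea (Xl d1) = fr1 d1" "ima (Xl d1) = cross3 d1 (fr1 d1)" unfolding Xl_def by (rule rea_X, rule ima_X)
  moreover have "rea (Xl d1) = Re c *\<^sub>R a2 - Im c *\<^sub>R b2" "ima (Xl d1) = Im c *\<^sub>R a2 + Re c *\<^sub>R b2"
    unfolding X unfolding Xl_def a2_def[symmetric] b2_def[symmetric] by (rule rea_scale, rule ima_scale)
  ultimately have "d1 = ((Re c)^2 + (Im c)^2) *\<^sub>R d2" using c1 c2 cross_rot by metis
  then have "norm d1 = ((Re c)^2 + (Im c)^2) * norm d2" by (simp add: add_nonneg_nonneg)
  then have "(Re c)^2 + (Im c)^2 = 1" using n1 n2 by simp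
  with \<open>d1 = _\<close> show "d1 = d2" by simp
qed

lemma cvec_add: "cvec (u + w) = cvec u + cvec w" and cvec_scaleR: "cvec (t *\<^sub>R u) = complex_of_real t *s cvec u"
  by (simp_all add: cvec_def vec_eq_iff)

lemma cdot_add: "cdot (u + v) w = cdot u w + cdot v w"
  by (simp add: cdot_def sum.distrib algebra_simps)

lemma line_surj:
  assumes iso: "cdot x x = 0" and xnz: "x \<noteq> 0"
  shows "\<exists>L d k. (L, d) \<in> oriented_lines \<and> k \<noteq> 0 \<and> Xl d = k *s x \<and> Rl L d = k * r"
proof -
  define a where "a = rea x"
  define b where "b = ima x"
  define \<rho> where "\<rho> = norm a"
  have xd: "x = cvec a + \<i> *s cvec b" unfolding a_def b_def by (rule x_decomp)
  have anz: "a \<noteq> 0" using rea_nz[OF iso xnz] by (simp add: a_def)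
  then have rpos: "\<rho> > 0" by (simp add: \<rho>_def)
  have aa: "a \<bullet> a = \<rho>^2" by (simp add: \<rho>_def power2_norm_eq_inner)
  have bb: "b \<bullet> b = \<rho>^2" using iso_real(1)[OF iso] aa by (simp add: a_def b_def)
  have ab: "a \<bullet> b = 0" using iso_real(2)[OF iso] by (simp add: a_def b_def)
  define e1 where "e1 = (1/\<rho>) *\<^sub>R a"
  define e2 where "e2 = (1/\<rho>) *\<^sub>R b"
  have h1: "e1 \<bullet> e1 = 1" using aa rpos by (simp add: e1_def power2_eq_square)
  have h2: "e2 \<bullet> e2 = 1" using bb rpos by (simp add: e2_def power2_eq_square)
  have h12: "e1 \<bullet> e2 = 0" using ab by (simp add: e1_def e2_def)
  define d where "d = cross3 e1 e2"
  have dd: "d \<bullet> d = 1"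
    using norm_cross_dot[of e1 e2] h1 h2 h12 unfolding d_def
    by (simp add: power2_norm_eq_inner[symmetric] norm_eq_1[symmetric] power_mult_distrib)
  then have nd: "norm d = 1" by (simp add: norm_eq_1)
  have de1: "d \<bullet> e1 = 0" "d \<bullet> e2 = 0" unfolding d_def by (simp_all add: dot_cross_self inner_commute)
  define q where "q = (Re r / (2 * \<rho>^2)) *\<^sub>R a + (Im r / (2 * \<rho>^2)) *\<^sub>R b"
  define L where "L = {q + t *\<^sub>R d | t. True}"
  have OL: "(L, d) \<in> oriented_lines" unfolding oriented_lines_def L_def using nd by blast
  define a' where "a' = fr1 d"
  have a'a': "a' \<bullet> a' = 1" and a'd: "a' \<bullet> d = 0" using fr1 by (simp_all add: a'_def)
  define \<alpha> where "\<alpha> = a' \<bullet> e1"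
  define \<beta> where "\<beta> = a' \<bullet> e2"
  have exp: "a' = \<alpha> *\<^sub>R e1 + \<beta> *\<^sub>R e2"
    using frame_expand[OF h1 h2 h12, of a'] a'd by (simp add: \<alpha>_def \<beta>_def d_def)
  have ab1: "\<alpha>^2 + \<beta>^2 = 1"
  proof -
    have "a' \<bullet> a' = \<alpha>^2 + \<beta>^2"
      by (subst (1 2) exp) (simp add: inner_add_left inner_add_right h1 h2 h12 inner_commute power2_eq_square)
    then show ?thesis using a'a' by simp
  qed
  have cde: "cross3 d e1 = e2" "cross3 d e2 = - e1"
    unfolding d_def using h1 h2 h12 by (simp_all add: cross_cross_l inner_commute)
  have b': "cross3 d a' = \<alpha> *\<^sub>R e2 - \<beta> *\<^sub>R e1"
    by (subst exp) (simp add: cross_add_right cross_mult_right cde)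
  define k where "k = (complex_of_real \<alpha> - \<i> * complex_of_real \<beta>) / complex_of_real \<rho>"
  have knz: "k \<noteq> 0"
  proof
    assume "k = 0"
    then have "complex_of_real \<alpha> - \<i> * complex_of_real \<beta> = 0" using rpos by (simp add: k_def)
    then have "\<alpha> = 0" "\<beta> = 0" by (simp_all add: complex_eq_iff)
    then show False using ab1 by simp
  qed
  have Xk: "Xl d = k *s x"
    unfolding Xl_def a'_def[symmetric] b' unfolding exp xd using rpos
    by (simp add: vec_eq_iff cvec_def complex_eq_iff k_def e1_def e2_def field_simps)
  have ex: "\<exists>q. L = {q + t *\<^sub>R d | t. True}" unfolding L_def by blast
  define q' where "q' = qpt L d"
  have L': "L = {q' + t *\<^sub>R d | t. True}" using someI_ex[OF ex] by (simp add: q'_def qpt_def)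
  have "q' \<in> L" unfolding L' by (auto intro: exI[of _ 0])
  then obtain t where qt: "q' = q + t *\<^sub>R d" unfolding L_def by blast
  have b'd: "d \<bullet> cross3 d a' = 0" by (simp add: dot_cross_self)
  have "cdot (cvec (t *\<^sub>R d)) (Xl d) = 0"
    unfolding Xl_def a'_def[symmetric] cdot_cvec_X using a'd b'd by (simp add: inner_commute)
  then have "cdot (cvec q') (Xl d) = cdot (cvec q) (Xl d)" unfolding qt cvec_add cdot_add by simp
  also have "\<dots> = k * cdot (cvec q) x" unfolding Xk by (simp add: cdot_scale)
  also have "cdot (cvec q) x = r / 2"
  proof -
    have "q \<bullet> a = Re r / 2" unfolding q_def using aa ab rpos
      by (simp add: inner_add_left inner_add_right inner_commute power2_eq_square)
    moreover have "q \<bullet> b = Im r / 2" unfolding q_def using bb ab rpos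
      by (simp add: inner_add_left inner_add_right inner_commute power2_eq_square)
    ultimately show ?thesis unfolding xd cdot_cvec_X by (simp add: complex_eq_iff)
  qed
  finally have "Rl L d = k * r" by (simp add: Rl_def q'_def mult.commute)
  then show ?thesis using OL knz Xk by blast
qed



definition ptL :: "((real^3) set) \<times> (real^3) \<Rightarrow> pt" where
  "ptL l = (0, 0, Xl (snd l), 0, Rl (fst l) (snd l))"
definition ptR :: "((real^3) set) \<times> (real^3) \<Rightarrow> pt" where
  "ptR l = (0, 0, 0, Xl (snd l), Rl (fst l) (snd l))"

lemma ptL_parts: "ph (ptL l) = 0" "pM (ptL l) = 0" "px (ptL l) = Xl (snd l)" "py (ptL l) = 0"
  "pr (ptL l) = Rl (fst l) (snd l)"
  by (simp_all add: ptL_def ph_def pM_def px_def py_def pr_def)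

lemma ptR_parts: "ph (ptR l) = 0" "pM (ptR l) = 0" "px (ptR l) = 0" "py (ptR l) = Xl (snd l)"
  "pr (ptR l) = Rl (fst l) (snd l)"
  by (simp_all add: ptR_def ph_def pM_def px_def py_def pr_def)

lemma cdot_zero: "cdot 0 w = 0" "cdot w 0 = 0" by (simp_all add: cdot_def)
lemma cdot_comm: "cdot u w = cdot w u" by (simp add: cdot_def mult.commute)
lemma zero_mv: "(0::complex^3^3) *v u = 0" by (simp add: matrix_vector_mult_def vec_eq_iff)

lemma psc_ptL: "psc_vec (ptL l) p P \<longleftrightarrow> Rl (fst l) (snd l) - 2 * cdot (cvec p) (Xl (snd l)) = 0"
  by (simp add: psc_vec_def ptL_parts cdot_zero zero_mv)

lemma psc_ptR: "psc_vec (ptR l) p P \<longleftrightarrow> Rl (fst l) (snd l) - 2 * cdot (cvec P) (Xl (snd l)) = 0"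
  by (simp add: psc_vec_def ptR_parts cdot_zero zero_mv cdot_comm[of "Xl (snd l)"])

lemma OL_norm: "l \<in> oriented_lines \<Longrightarrow> norm (snd l) = 1"
  by (auto simp: oriented_lines_def)

lemma GL_bij: "bij_betw (\<lambda>l. pclass (ptL l)) oriented_lines left_coll"
  unfolding bij_betw_def
proof (intro conjI)
  show "inj_on (\<lambda>l. pclass (ptL l)) oriented_lines"
  proof (rule inj_onI)
    fix l1 l2 assume l: "l1 \<in> oriented_lines" "l2 \<in> oriented_lines" and e: "pclass (ptL l1) = pclass (ptL l2)"
    obtain c where c: "c \<noteq> 0" "ptL l1 = pscale c (ptL l2)" using pclass_eqD[OF e] by blast
    then have X: "Xl (snd l1) = c *s Xl (snd l2)" and R: "Rl (fst l1) (snd l1) = c * Rl (fst l2) (snd l2)"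
      by (metis ptL_parts(3) pscale_parts(3), metis ptL_parts(5) pscale_parts(5))
    have "fst l1 = fst l2 \<and> snd l1 = snd l2"
      by (rule line_inj[OF _ _ X R c(1)]) (use l in simp_all)
    then show "l1 = l2" by (simp add: prod_eq_iff)
  qed
  show "(\<lambda>l. pclass (ptL l)) ` oriented_lines = left_coll"
  proof (intro set_eqI iffI)
    fix \<beta> assume "\<beta> \<in> (\<lambda>l. pclass (ptL l)) ` oriented_lines"
    then obtain l where l: "l \<in> oriented_lines" "\<beta> = pclass (ptL l)" by blast
    have "ptL l \<in> Xcone" unfolding ptL_def using Xl_iso[OF OL_norm[OF l(1)]] by (intro left_point_Xcone)
    moreover have "px (ptL l) \<noteq> 0" using Xl_iso[OF OL_norm[OF l(1)]] by (simp add: ptL_parts)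
    ultimately show "\<beta> \<in> left_coll" unfolding left_coll_def l(2) using ptL_parts by blast
  next
    fix \<beta> assume "\<beta> \<in> left_coll"
    then obtain v where v: "\<beta> = pclass v" "v \<in> Xcone" "ph v = 0" "pM v = 0" "px v \<noteq> 0" "py v = 0"
      unfolding left_coll_def by blast
    have iso: "cdot (px v) (px v) = 0" by (rule Xcone_iso_x[OF v(2,3)])
    obtain L d k where Ld: "(L, d) \<in> oriented_lines" "k \<noteq> 0" "Xl d = k *s px v" "Rl L d = k * pr v"
      using line_surj[OF iso v(5), of "pr v"] by blast
    have "ptL (L, d) = pscale k v"
      unfolding pt_eq_iff pscale_parts ptL_parts using Ld v by (simp add: vec_eq_iff)
    then have "pclass (ptL (L, d)) = \<beta>" using v(1) pclass_scale[OF Ld(2)] by simp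
    then show "\<beta> \<in> (\<lambda>l. pclass (ptL l)) ` oriented_lines" using Ld(1) by blast
  qed
qed

lemma GR_bij: "bij_betw (\<lambda>l. pclass (ptR l)) oriented_lines right_coll"
  unfolding bij_betw_def
proof (intro conjI)
  show "inj_on (\<lambda>l. pclass (ptR l)) oriented_lines"
  proof (rule inj_onI)
    fix l1 l2 assume l: "l1 \<in> oriented_lines" "l2 \<in> oriented_lines" and e: "pclass (ptR l1) = pclass (ptR l2)"
    obtain c where c: "c \<noteq> 0" "ptR l1 = pscale c (ptR l2)" using pclass_eqD[OF e] by blast
    then have X: "Xl (snd l1) = c *s Xl (snd l2)" and R: "Rl (fst l1) (snd l1) = c * Rl (fst l2) (snd l2)"
      by (metis ptR_parts(4) pscale_parts(4), metis ptR_parts(5) pscale_parts(5))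
    have "fst l1 = fst l2 \<and> snd l1 = snd l2"
      by (rule line_inj[OF _ _ X R c(1)]) (use l in simp_all)
    then show "l1 = l2" by (simp add: prod_eq_iff)
  qed
  show "(\<lambda>l. pclass (ptR l)) ` oriented_lines = right_coll"
  proof (intro set_eqI iffI)
    fix \<beta> assume "\<beta> \<in> (\<lambda>l. pclass (ptR l)) ` oriented_lines"
    then obtain l where l: "l \<in> oriented_lines" "\<beta> = pclass (ptR l)" by blast
    have "ptR l \<in> Xcone" unfolding ptR_def using Xl_iso[OF OL_norm[OF l(1)]] by (intro right_point_Xcone)
    moreover have "py (ptR l) \<noteq> 0" using Xl_iso[OF OL_norm[OF l(1)]] by (simp add: ptR_parts)
    ultimately show "\<beta> \<in> right_coll" unfolding right_coll_def l(2) using ptR_parts by blast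
  next
    fix \<beta> assume "\<beta> \<in> right_coll"
    then obtain v where v: "\<beta> = pclass v" "v \<in> Xcone" "ph v = 0" "pM v = 0" "px v = 0" "py v \<noteq> 0"
      unfolding right_coll_def by blast
    have iso: "cdot (py v) (py v) = 0" by (rule Xcone_iso_y[OF v(2,3)])
    obtain L d k where Ld: "(L, d) \<in> oriented_lines" "k \<noteq> 0" "Xl d = k *s py v" "Rl L d = k * pr v"
      using line_surj[OF iso v(6), of "pr v"] by blast
    have "ptR (L, d) = pscale k v"
      unfolding pt_eq_iff pscale_parts ptR_parts using Ld v by (simp add: vec_eq_iff)
    then have "pclass (ptR (L, d)) = \<beta>" using v(1) pclass_scale[OF Ld(2)] by simp
    then show "\<beta> \<in> (\<lambda>l. pclass (ptR l)) ` oriented_lines" using Ld(1) by blast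
  qed
qed

theorem mainTheorem6:
  shows "(\<exists>g. bij_betw g left_coll oriented_lines \<and>
            (\<forall>\<beta>\<in>left_coll. \<forall>p P. psc \<beta> p P \<longleftrightarrow> p \<in> fst (g \<beta>)))
       \<and> (\<exists>g. bij_betw g right_coll oriented_lines \<and>
            (\<forall>\<beta>\<in>right_coll. \<forall>p P. psc \<beta> p P \<longleftrightarrow> P \<in> fst (g \<beta>)))"
proof (intro conjI)
  let ?G = "\<lambda>l. pclass (ptL l)"
  have bG: "bij_betw ?G oriented_lines left_coll" by (rule GL_bij)
  show "\<exists>g. bij_betw g left_coll oriented_lines \<and>
            (\<forall>\<beta>\<in>left_coll. \<forall>p P. psc \<beta> p P \<longleftrightarrow> p \<in> fst (g \<beta>))"
  proof (intro exI conjI ballI allI)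
    show "bij_betw (inv_into oriented_lines ?G) left_coll oriented_lines" by (rule bij_betw_inv_into[OF bG])
    fix \<beta> p P assume b: "\<beta> \<in> left_coll"
    have im: "\<beta> \<in> ?G ` oriented_lines" using b bG by (simp add: bij_betw_def)
    define l where "l = inv_into oriented_lines ?G \<beta>"
    have l: "l \<in> oriented_lines" unfolding l_def by (rule inv_into_into[OF im])
    have Gl: "?G l = \<beta>" unfolding l_def by (rule f_inv_into_f[OF im])
    have lp: "(fst l, snd l) \<in> oriented_lines" using l by simp
    have "psc \<beta> p P \<longleftrightarrow> psc_vec (ptL l) p P" unfolding Gl[symmetric] by (rule psc_pclass)
    also have "\<dots> \<longleftrightarrow> p \<in> fst l" unfolding psc_ptL by (rule line_iff[OF lp])
    finally show "psc \<beta> p P \<longleftrightarrow> p \<in> fst (inv_into oriented_lines ?G \<beta>)" by (simp add: l_def)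
  qed
  let ?H = "\<lambda>l. pclass (ptR l)"
  have bH: "bij_betw ?H oriented_lines right_coll" by (rule GR_bij)
  show "\<exists>g. bij_betw g right_coll oriented_lines \<and>
            (\<forall>\<beta>\<in>right_coll. \<forall>p P. psc \<beta> p P \<longleftrightarrow> P \<in> fst (g \<beta>))"
  proof (intro exI conjI ballI allI)
    show "bij_betw (inv_into oriented_lines ?H) right_coll oriented_lines" by (rule bij_betw_inv_into[OF bH])
    fix \<beta> p P assume b: "\<beta> \<in> right_coll"
    have im: "\<beta> \<in> ?H ` oriented_lines" using b bH by (simp add: bij_betw_def)
    define l where "l = inv_into oriented_lines ?H \<beta>"
    have l: "l \<in> oriented_lines" unfolding l_def by (rule inv_into_into[OF im])
    have Gl: "?H l = \<beta>" unfolding l_def by (rule f_inv_into_f[OF im])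
    have lp: "(fst l, snd l) \<in> oriented_lines" using l by simp
    have "psc \<beta> p P \<longleftrightarrow> psc_vec (ptR l) p P" unfolding Gl[symmetric] by (rule psc_pclass)
    also have "\<dots> \<longleftrightarrow> P \<in> fst l" unfolding psc_ptR by (rule line_iff[OF lp])
    finally show "psc \<beta> p P \<longleftrightarrow> P \<in> fst (inv_into oriented_lines ?H \<beta>)" by (simp add: l_def)
  qed
qed

end
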